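(* Let $A,B\in\mathrm{SL}_2\mathbb{R}$ be noncommuting, coherently oriented, both hyperbolic, and assume their translation axes intersect. If $[a]\le[b]$, then $b$ is an optimal word, and so is $a$ provided $[a]=[b]$. There are no other optimal words.
   Context: Setting: $A,B$ have trace $\ge2$; hyperbolic means trace $>2$, with attracting/repelling fixed points $\alpha^\pm$ (for $A$), $\beta^\pm$ (for $B$) in $\partial\mathcal{H}=\mathbb{P}^1\mathbb{R}$; the translation axis is the hyperbolic geodesic joining the two fixed points. Coherent orientation: with $\partial\mathcal{H}$ cyclically ordered and $[\alpha,\beta]$ the closed counterclockwise interval from $\alpha$ to $\beta$, let $I^+=\{\alpha^+\}$ if $\alpha^+=\beta^+$, and otherwise the one of $[\alpha^+,\beta^+],[\beta^+,\alpha^+]$ mapped into itself by both $A$ and $B$ (if it exists); define $I^-$ likewise with $A^{-1},B^{-1},\alpha^-,\beta^-$; the pair is coherently oriented if both exist. Words: $F_2^+$ is the free semigroup of nonempty words over $\{a,b\}$, $|w|$ the length, $\phi$ the homomorphism with $\phi(a)=A,\phi(b)=B$, and $[w]=\mathrm{tr}(\phi(w))$. Define $w\preceq u$ iff $[w^{|u|}]\le[u^{|w|}]$; $w$ is maximal if $u\preceq w$ for all $u\in F_2^+$. A Lyndon word is one strictly smaller in the lexicographic order (with $a<b$) than each of its proper rotations. A complete set of optimal words is a subset $\{v_1,v_2,\dots\}\subseteq F_2^+$ of pairwise distinct maximal Lyndon words such that every maximal word is a power of a rotation of some $v_i$; such a set is unique if it exists, and a word is optimal if it belongs to it. *)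

theory Defs
  imports "HOL-Analysis.Analysis"
begin

type_synonym mat2 = "real^2^2"

datatype letter = La | Lb

definition letter_less :: "(letter \<times> letter) set" where
  "letter_less = {(La, Lb)}"

definition SL2 :: "mat2 \<Rightarrow> bool" where
  "SL2 M \<longleftrightarrow> det M = 1"

definition phi :: "mat2 \<Rightarrow> mat2 \<Rightarrow> letter list \<Rightarrow> mat2" where
  "phi A B w = foldr (\<lambda>l M. (case l of La \<Rightarrow> A | Lb \<Rightarrow> B) ** M) w (mat 1)"

text \<open>[w] = tr(phi w).\<close>
definition wtr :: "mat2 \<Rightarrow> mat2 \<Rightarrow> letter list \<Rightarrow> real" where
  "wtr A B w = trace (phi A B w)"

definition wpow :: "letter list \<Rightarrow> nat \<Rightarrow> letter list" where
  "wpow w n = concat (replicate n w)"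

definition wle :: "mat2 \<Rightarrow> mat2 \<Rightarrow> letter list \<Rightarrow> letter list \<Rightarrow> bool" where
  "wle A B w u \<longleftrightarrow> wtr A B (wpow w (length u)) \<le> wtr A B (wpow u (length w))"

definition maximal_word :: "mat2 \<Rightarrow> mat2 \<Rightarrow> letter list \<Rightarrow> bool" where
  "maximal_word A B w \<longleftrightarrow> w \<noteq> [] \<and> (\<forall>u. u \<noteq> [] \<longrightarrow> wle A B u w)"

definition lyndon :: "letter list \<Rightarrow> bool" where
  "lyndon w \<longleftrightarrow> w \<noteq> [] \<and>
     (\<forall>k. 0 < k \<and> k < length w \<longrightarrow> (w, rotate k w) \<in> lexord letter_less)"

definition complete_optimal :: "mat2 \<Rightarrow> mat2 \<Rightarrow> letter list set \<Rightarrow> bool" where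
  "complete_optimal A B S \<longleftrightarrow>
     (\<forall>v\<in>S. maximal_word A B v \<and> lyndon v) \<and>
     (\<forall>w. maximal_word A B w \<longrightarrow>
        (\<exists>v\<in>S. \<exists>k n. n \<ge> 1 \<and> w = wpow (rotate k v) n))"

text \<open>Boundary of the hyperbolic plane, P^1(R), parametrised by angles theta in [0,pi):
  theta stands for the line spanned by (cos theta, sin theta), i.e. the boundary point
  cot theta of the upper half plane (theta = 0 is infinity).\<close>
definition P1 :: "real set" where
  "P1 = {0..<pi}"

definition dir :: "real \<Rightarrow> real^2" where
  "dir \<theta> = (\<chi> i. if i = 1 then cos \<theta> else sin \<theta>)"

definition hyperbolic :: "mat2 \<Rightarrow> bool" where
  "hyperbolic M \<longleftrightarrow> trace M > 2"

definition attr_fp :: "mat2 \<Rightarrow> real" where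
  "attr_fp M = (THE \<theta>. \<theta> \<in> P1 \<and> (\<exists>l. \<bar>l\<bar> > 1 \<and> M *v dir \<theta> = l *\<^sub>R dir \<theta>))"

definition rep_fp :: "mat2 \<Rightarrow> real" where
  "rep_fp M = (THE \<theta>. \<theta> \<in> P1 \<and> (\<exists>l. \<bar>l\<bar> < 1 \<and> M *v dir \<theta> = l *\<^sub>R dir \<theta>))"

text \<open>Closed counterclockwise interval from p to q in P^1(R) = boundary of the upper half
  plane. Moving counterclockwise (increasing real part on the real axis) corresponds to
  decreasing theta.\<close>
definition ccw_interval :: "real \<Rightarrow> real \<Rightarrow> real set" where
  "ccw_interval p q = {\<theta>\<in>P1. frac ((p - \<theta>) / pi) \<le> frac ((p - q) / pi)}"

definition maps_into_itself :: "mat2 \<Rightarrow> real set \<Rightarrow> bool" where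
  "maps_into_itself M I \<longleftrightarrow>
     (\<forall>\<theta>\<in>I. \<exists>\<theta>'\<in>I. \<exists>c. c \<noteq> 0 \<and> M *v dir \<theta> = c *\<^sub>R dir \<theta>')"

definition coherently_oriented :: "mat2 \<Rightarrow> mat2 \<Rightarrow> bool" where
  "coherently_oriented A B \<longleftrightarrow>
     (attr_fp A = attr_fp B \<or>
       (\<exists>I\<in>{ccw_interval (attr_fp A) (attr_fp B), ccw_interval (attr_fp B) (attr_fp A)}.
          maps_into_itself A I \<and> maps_into_itself B I)) \<and>
     (rep_fp A = rep_fp B \<or>
       (\<exists>I\<in>{ccw_interval (rep_fp A) (rep_fp B), ccw_interval (rep_fp B) (rep_fp A)}.
          maps_into_itself (matrix_inv A) I \<and> maps_into_itself (matrix_inv B) I))"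

definition geodesic :: "real \<Rightarrow> real \<Rightarrow> complex set" where
  "geodesic p q =
     (if p = 0 then {z. Im z > 0 \<and> Re z = cot q}
      else if q = 0 then {z. Im z > 0 \<and> Re z = cot p}
      else {z. Im z > 0 \<and> cmod (z - complex_of_real ((cot p + cot q) / 2)) = \<bar>cot p - cot q\<bar> / 2})"

definition translation_axis :: "mat2 \<Rightarrow> complex set" where
  "translation_axis M = geodesic (rep_fp M) (attr_fp M)"

end

theory Submission
  imports Defs
begin


lemma mm_entries:
  fixes M N :: "real^2^2"
  shows "(M ** N)$1$1 = M$1$1*N$1$1 + M$1$2*N$2$1"
    "(M ** N)$1$2 = M$1$1*N$1$2 + M$1$2*N$2$2"
    "(M ** N)$2$1 = M$2$1*N$1$1 + M$2$2*N$2$1"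
    "(M ** N)$2$2 = M$2$1*N$1$2 + M$2$2*N$2$2"
  by (simp_all add: matrix_matrix_mult_def sum_2)

lemma mat1_entries:
  shows "(mat 1 :: real^2^2)$1$1 = 1" "(mat 1 :: real^2^2)$1$2 = 0"
    "(mat 1 :: real^2^2)$2$1 = 0" "(mat 1 :: real^2^2)$2$2 = 1"
  by (simp_all add: mat_def)

lemma mat2_eq_iff:
  fixes M N :: "real^2^2"
  shows "M = N \<longleftrightarrow> M$1$1 = N$1$1 \<and> M$1$2 = N$1$2 \<and> M$2$1 = N$2$1 \<and> M$2$2 = N$2$2"
  by (auto simp: vec_eq_iff forall_2)

lemma trace2: "trace (M::real^2^2) = M$1$1 + M$2$2"
  by (simp add: trace_def sum_2)

lemma mv_entries:
  fixes M :: "real^2^2" and v :: "real^2"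
  shows "(M *v v)$1 = M$1$1 * v$1 + M$1$2 * v$2" "(M *v v)$2 = M$2$1 * v$1 + M$2$2 * v$2"
  by (simp_all add: matrix_vector_mult_def sum_2)

lemma dir_entries: "dir t $ 1 = cos t" "dir t $ 2 = sin t"
  by (simp_all add: dir_def)

lemma phi_Nil: "phi A B [] = mat 1" by (simp add: phi_def)
lemma phi_Cons: "phi A B (l # w) = (case l of La \<Rightarrow> A | Lb \<Rightarrow> B) ** phi A B w"
  by (simp add: phi_def)
lemma phi_append: "phi A B (u @ v) = phi A B u ** phi A B v"
  by (induction u) (simp_all add: phi_Nil phi_Cons matrix_mul_assoc)

lemma wpow_Suc: "wpow w (Suc n) = w @ wpow w n" by (simp add: wpow_def)
lemma wpow_0: "wpow w 0 = []" by (simp add: wpow_def)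
lemma wpow_1: "wpow w 1 = w" by (simp add: wpow_def)
lemma wpow_single: "wpow [x] n = replicate n x" by (induction n) (simp_all add: wpow_def)



definition bnd :: "real^2^2 \<Rightarrow> real \<Rightarrow> bool" where
  "bnd M K \<longleftrightarrow> (\<forall>x y. (M$1$1*x + M$1$2*y)^2 + (M$2$1*x + M$2$2*y)^2 \<le> K*(x^2+y^2))"

lemma bnd_mono: "bnd M K \<Longrightarrow> K \<le> K' \<Longrightarrow> bnd M K'"
  unfolding bnd_def
  by (meson add_nonneg_nonneg mult_right_mono order_trans zero_le_power2)

lemma bnd_id: "bnd (mat 1) 1"
  by (simp add: bnd_def mat1_entries)

lemma bnd_mult:
  assumes "bnd M K" "bnd N L" "0 \<le> K"
  shows "bnd (M ** N) (K*L)"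
  unfolding bnd_def
proof (intro allI)
  fix x y :: real
  define u where "u = N$1$1*x + N$1$2*y"
  define v where "v = N$2$1*x + N$2$2*y"
  have e: "((M ** N)$1$1*x + (M ** N)$1$2*y) = M$1$1 * u + M$1$2 * v"
          "((M ** N)$2$1*x + (M ** N)$2$2*y) = M$2$1 * u + M$2$2 * v"
    by (simp_all add: mm_entries u_def v_def algebra_simps)
  have "(M$1$1 * u + M$1$2 * v)^2 + (M$2$1 * u + M$2$2 * v)^2 \<le> K*(u^2+v^2)"
    using assms(1) by (simp add: bnd_def)
  also have "\<dots> \<le> K*(L*(x^2+y^2))"
    using assms(2) assms(3) by (intro mult_left_mono) (simp_all add: bnd_def u_def v_def)
  finally show "((M ** N)$1$1*x + (M ** N)$1$2*y)^2 + ((M ** N)$2$1*x + (M ** N)$2$2*y)^2 \<le> K*L*(x^2+y^2)"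
    by (simp add: e mult.assoc)
qed

lemma quad_psd_det:
  fixes al ga q K :: real
  assumes h: "\<And>x y. 0 \<le> al*x^2 - 2*q*x*y + ga*y^2"
  shows "q^2 \<le> al*ga"
proof -
  have a0: "0 \<le> al" using h[of 1 0] by simp
  have g0: "0 \<le> ga" using h[of 0 1] by simp
  show ?thesis
  proof (cases "al > 0")
    case True
    have "0 \<le> al*q^2 - 2*q*q*al + ga*al^2" using h[of q al] by (simp add: power2_eq_square algebra_simps)
    hence "0 \<le> al*(al*ga - q^2)" by (simp add: power2_eq_square algebra_simps)
    with True show ?thesis by (simp add: zero_le_mult_iff)
  next
    case False
    hence al: "al = 0" using a0 by simp
    show ?thesis
    proof (cases "ga > 0")
      case True
      have "0 \<le> al*ga^2 - 2*q*ga*q + ga*q^2" using h[of ga q] by (simp add: power2_eq_square algebra_simps)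
      hence "0 \<le> ga*(al*ga - q^2)" by (simp add: power2_eq_square algebra_simps)
      with True show ?thesis by (simp add: zero_le_mult_iff)
    next
      case False
      hence "ga = 0" using g0 by simp
      hence "0 \<le> - 2*q*q" using h[of q 1] al by simp
      hence "q^2 \<le> 0" by (simp add: power2_eq_square)
      hence "q = 0" by simp
      thus ?thesis using al by simp
    qed
  qed
qed

lemma bnd_trace:
  assumes d: "det M = 1" and b: "bnd M K"
  shows "0 < K" "(trace M)^2 \<le> K + 1/K + 2"
proof -
  define a where "a = M$1$1"
  define bb where "bb = M$1$2"
  define c where "c = M$2$1"
  define dd where "dd = M$2$2"
  have det: "a*dd - bb*c = 1" using d by (simp add: det_2 a_def bb_def c_def dd_def)
  have h: "\<And>x y. (a*x + bb*y)^2 + (c*x + dd*y)^2 \<le> K*(x^2+y^2)"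
    using b by (simp add: bnd_def a_def bb_def c_def dd_def)
  define p where "p = a^2 + c^2"
  define r where "r = bb^2 + dd^2"
  define q where "q = a*bb + c*dd"
  have h2: "\<And>x y. 0 \<le> (K-p)*x^2 - 2*q*x*y + (K-r)*y^2"
  proof -
    fix x y
    have "(a*x + bb*y)^2 + (c*x + dd*y)^2 = p*x^2 + 2*q*x*y + r*y^2"
      by (simp add: p_def q_def r_def power2_eq_square algebra_simps)
    moreover have "(K-p)*x^2 - 2*q*x*y + (K-r)*y^2 = K*(x^2+y^2) - (p*x^2 + 2*q*x*y + r*y^2)"
      by (simp add: algebra_simps)
    ultimately show "0 \<le> (K-p)*x^2 - 2*q*x*y + (K-r)*y^2" using h[of x y] by linarith
  qed
  have qq: "q^2 \<le> (K-p)*(K-r)" by (rule quad_psd_det[OF h2])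
  have pr: "p*r - q^2 = 1"
  proof -
    have "p*r - q^2 = (a*dd - bb*c)^2" by (simp add: p_def q_def r_def power2_eq_square algebra_simps)
    thus ?thesis using det by simp
  qed
  have Kp: "p \<le> K" using h[of 1 0] by (simp add: p_def)
  have p0: "0 \<le> p" by (simp add: p_def)
  show K0: "0 < K"
  proof (rule ccontr)
    assume "\<not> 0 < K"
    hence "p \<le> 0" using Kp by simp
    hence "p = 0" using p0 by simp
    hence "q^2 = -1" using pr by simp
    moreover have "q^2 \<ge> 0" by simp
    ultimately show False by linarith
  qed
  have "K*K - K*(p+r) + 1 \<ge> 0" using qq pr by (simp add: algebra_simps power2_eq_square)
  hence "K*(p+r) \<le> K*(K + 1/K)" using K0 by (simp add: algebra_simps)
  hence pr2: "p + r \<le> K + 1/K" using K0 by simp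
  have "(trace M)^2 = (a+dd)^2" by (simp add: trace2 a_def dd_def)
  also have "\<dots> \<le> p + r + 2"
  proof -
    have "2*a*dd = 2 + 2*bb*c" using det by simp
    moreover have "2*bb*c \<le> bb^2 + c^2" using zero_le_power2[of "bb - c"] unfolding power2_diff by linarith
    ultimately show ?thesis by (simp add: p_def r_def power2_eq_square algebra_simps)
  qed
  finally show "(trace M)^2 \<le> K + 1/K + 2" using pr2 by simp
qed

lemma bnd_of_nu:
  assumes d: "det M = 1" and K1: "1 \<le> K"
    and nu: "M$1$1^2 + M$1$2^2 + M$2$1^2 + M$2$2^2 \<le> K + 1/K"
  shows "bnd M K"
proof -
  define a where "a = M$1$1"
  define bb where "bb = M$1$2"
  define c where "c = M$2$1"
  define dd where "dd = M$2$2"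
  have det: "a*dd - bb*c = 1" using d by (simp add: det_2 a_def bb_def c_def dd_def)
  define p where "p = a^2 + c^2"
  define r where "r = bb^2 + dd^2"
  define q where "q = a*bb + c*dd"
  have pr: "p*r = 1 + q^2"
  proof -
    have "p*r - q^2 = (a*dd - bb*c)^2" by (simp add: p_def q_def r_def power2_eq_square algebra_simps)
    thus ?thesis using det by simp
  qed
  have nu': "p + r \<le> K + 1/K" using nu by (simp add: p_def r_def a_def bb_def c_def dd_def algebra_simps)
  have p0: "0 \<le> p" "0 \<le> r" by (simp_all add: p_def r_def)
  have prge: "p*r \<ge> 1" using pr zero_le_power2[of q] by linarith
  have pp: "p > 0" "r > 0" using prge p0
    by (metis less_eq_real_def mult_zero_left mult_zero_right not_one_le_zero)+
  have mono: "\<And>s. s > K \<Longrightarrow> s + 1/s > K + 1/K"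
  proof -
    fix s assume s: "s > K"
    have "s + 1/s - (K + 1/K) = (s - K)*(s*K - 1)/(s*K)" using s K1
      by (simp add: field_simps)
    moreover have "(s - K)*(s*K - 1)/(s*K) > 0"
    proof -
      have "s*K \<ge> s*1" using s K1 by (intro mult_left_mono) auto
      hence "s*K > 1" using s K1 by linarith
      thus ?thesis using s K1 by (intro divide_pos_pos mult_pos_pos) auto
    qed
    ultimately show "s + 1/s > K + 1/K" by simp
  qed
  have Kp: "p \<le> K"
  proof (rule ccontr)
    assume "\<not> p \<le> K"
    hence "p + 1/p > K + 1/K" using mono by simp
    moreover have "1/p \<le> r" using prge pp by (simp add: field_simps)
    ultimately show False using nu' by simp
  qed
  have Kr: "r \<le> K"
  proof (rule ccontr)
    assume "\<not> r \<le> K"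
    hence "r + 1/r > K + 1/K" using mono by simp
    moreover have "1/r \<le> p" using prge pp by (simp add: field_simps mult.commute)
    ultimately show False using nu' by simp
  qed
  have "K*(p+r) \<le> K*(K+1/K)" using nu' K1 by (simp add: mult_left_mono)
  hence detn: "q^2 \<le> (K-p)*(K-r)" using K1 pr by (simp add: algebra_simps)
  have "\<And>x y. 0 \<le> (K-p)*x^2 - 2*q*x*y + (K-r)*y^2"
  proof -
    fix x y :: real
    show "0 \<le> (K-p)*x^2 - 2*q*x*y + (K-r)*y^2"
    proof (cases "K - p > 0")
      case True
      have "(K-p)*((K-p)*x^2 - 2*q*x*y + (K-r)*y^2) = ((K-p)*x - q*y)^2 + ((K-p)*(K-r) - q^2)*y^2"
        by (simp add: power2_eq_square algebra_simps)
      also have "\<dots> \<ge> 0" using detn by simp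
      finally show ?thesis using True by (simp add: zero_le_mult_iff)
    next
      case False
      hence "K - p = 0" using Kp by simp
      hence "q = 0" using detn by simp
      thus ?thesis using Kr \<open>K - p = 0\<close> by simp
    qed
  qed
  thus ?thesis unfolding bnd_def
  proof (intro allI)
    fix x y
    assume h: "\<And>x y. 0 \<le> (K-p)*x^2 - 2*q*x*y + (K-r)*y^2"
    have "(a*x + bb*y)^2 + (c*x + dd*y)^2 = p*x^2 + 2*q*x*y + r*y^2"
      by (simp add: p_def q_def r_def power2_eq_square algebra_simps)
    thus "(M$1$1*x + M$1$2*y)^2 + (M$2$1*x + M$2$2*y)^2 \<le> K*(x^2+y^2)"
      using h[of x y] by (simp add: a_def bb_def c_def dd_def algebra_simps)
  qed
qed



lemma g_less: fixes x y :: real assumes "1 \<le> x" "x < y" shows "x + 1/x < y + 1/y"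
proof -
  have "y + 1/y - (x + 1/x) = (y - x)*(x*y - 1)/(x*y)" using assms by (simp add: field_simps)
  moreover have "(y - x)*(x*y - 1)/(x*y) > 0"
  proof -
    have "x*y \<ge> 1*y" using assms by (intro mult_right_mono) auto
    hence "x*y > 1" using assms by linarith
    thus ?thesis using assms by (intro divide_pos_pos mult_pos_pos) auto
  qed
  ultimately show ?thesis by simp
qed

lemma g_le: fixes x y :: real assumes "1 \<le> x" "x \<le> y" shows "x + 1/x \<le> y + 1/y"
proof (cases "x = y")
  case True thus ?thesis by simp
next
  case False thus ?thesis using g_less[OF assms(1), of y] assms(2) by simp
qed

definition lam :: "real \<Rightarrow> real" where "lam t = (t + sqrt (t^2 - 4))/2"

lemma lam_inv: assumes "2 \<le> t" shows "lam t * (t - lam t) = 1"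
proof -
  have "4 \<le> t^2" using power_mono[of 2 t 2] assms by simp
  hence s: "sqrt (t^2-4)^2 = t^2 - 4" by simp
  show ?thesis unfolding lam_def using s by (simp add: field_simps power2_eq_square)
qed

lemma lam_ge1: assumes "2 \<le> t" shows "1 \<le> lam t"
proof -
  have "4 \<le> t^2" using power_mono[of 2 t 2] assms by simp
  hence "0 \<le> sqrt (t^2 - 4)" by simp
  hence "2 \<le> t + sqrt (t^2 - 4)" using assms by linarith
  thus ?thesis unfolding lam_def by simp
qed

lemma lam_gt1: assumes "2 < t" shows "1 < lam t"
proof -
  have "2^2 < t^2" using assms by (intro power_strict_mono) auto
  hence "t^2 - 4 > 0" by simp
  hence "sqrt (t^2-4) > 0" by simp
  hence "2 < t + sqrt (t^2 - 4)" using assms by linarith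
  thus ?thesis unfolding lam_def by simp
qed

lemma lam_sum: assumes "2 \<le> t" shows "lam t + 1/lam t = t"
proof -
  have "1/lam t = t - lam t" using lam_inv[OF assms] lam_ge1[OF assms] by (simp add: field_simps)
  thus ?thesis by simp
qed

lemma lam_mono: assumes "2 \<le> t" "t \<le> t'" shows "lam t \<le> lam t'"
proof -
  have "t^2 \<le> t'^2" using assms by (simp add: power_mono)
  hence "sqrt (t^2-4) \<le> sqrt (t'^2-4)" by simp
  hence "t + sqrt (t^2-4) \<le> t' + sqrt (t'^2-4)" using assms by linarith
  thus ?thesis unfolding lam_def by simp
qed

lemma det_phi: assumes "det A = 1" "det B = 1" shows "det (phi A B w) = 1"
  by (induction w) (auto simp: phi_Nil phi_Cons det_mul assms split: letter.splits)

lemma trace_CH: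
  fixes B X :: "real^2^2"
  assumes "det B = 1"
  shows "trace (B ** (B ** X)) = trace B * trace (B ** X) - trace X"
proof -
  have d: "B$1$1*B$2$2 - B$1$2*B$2$1 = 1" using assms by (simp add: det_2)
  have "trace (B ** (B ** X)) - (trace B * trace (B ** X) - trace X)
     = (1 - (B$1$1*B$2$2 - B$1$2*B$2$1))*(X$1$1 + X$2$2)"
    by (simp add: trace2 mm_entries algebra_simps)
  thus ?thesis using d by simp
qed

lemma trace_pow:
  assumes d: "det L = 1" and t: "2 \<le> trace L"
    and L: "L = (case l of La \<Rightarrow> A | Lb \<Rightarrow> B)"
  shows "trace (phi A B (replicate n l)) = lam (trace L)^n + (1/lam (trace L))^n"
proof (induction n rule: nat_less_induct)
  case (1 n)
  define x where "x = lam (trace L)"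
  have x1: "x + 1/x = trace L" using lam_sum[OF t] by (simp add: x_def)
  have st: "\<And>m. phi A B (replicate (Suc m) l) = L ** phi A B (replicate m l)"
    by (simp add: phi_Cons L)
  show ?case
  proof (cases n)
    case 0 thus ?thesis by (simp add: phi_Nil trace2 mat1_entries)
  next
    case (Suc m)
    show ?thesis
    proof (cases m)
      case 0 thus ?thesis using Suc x1 by (simp add: phi_Cons phi_Nil x_def matrix_mul_rid L[symmetric])
    next
      case (Suc k)
      have "trace (phi A B (replicate n l)) = trace (L ** (L ** phi A B (replicate k l)))"
        using \<open>n = Suc m\<close> Suc by (simp add: phi_Cons L)
      also have "\<dots> = trace L * trace (phi A B (replicate (Suc k) l)) - trace (phi A B (replicate k l))"
        using trace_CH[OF d] by (simp add: phi_Cons L)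
      also have "\<dots> = (x + 1/x) * (x^Suc k + (1/x)^Suc k) - (x^k + (1/x)^k)"
      proof -
        have IH1: "trace (phi A B (replicate (Suc k) l)) = x^Suc k + (1/x)^Suc k"
          using "1"[rule_format, of "Suc k"] \<open>n = Suc m\<close> Suc unfolding x_def by blast
        have IH0: "trace (phi A B (replicate k l)) = x^k + (1/x)^k"
          using "1"[rule_format, of k] \<open>n = Suc m\<close> Suc unfolding x_def by simp
        show ?thesis unfolding IH1 IH0 x1 ..
      qed
      also have "\<dots> = x^n + (1/x)^n"
      proof -
        have "x \<noteq> 0" using lam_ge1[OF t] by (simp add: x_def)
        thus ?thesis using \<open>n = Suc m\<close> Suc by (simp add: field_simps power2_eq_square)
      qed
      finally show ?thesis by (simp add: x_def)
    qed
  qed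
qed

definition na :: "letter list \<Rightarrow> nat" where "na w = length (filter (\<lambda>l. l = La) w)"
definition nb :: "letter list \<Rightarrow> nat" where "nb w = length (filter (\<lambda>l. l = Lb) w)"

lemma na_nb: "na w + nb w = length w"
proof (induction w)
  case Nil thus ?case by (simp add: na_def nb_def)
next
  case (Cons l w) thus ?case by (cases l) (simp_all add: na_def nb_def)
qed

lemma bnd_phi:
  assumes "bnd A KA" "bnd B KB" "0 \<le> KA" "0 \<le> KB"
  shows "bnd (phi A B w) (KA^na w * KB^nb w)"
proof (induction w)
  case Nil thus ?case by (simp add: phi_Nil bnd_id na_def nb_def)
next
  case (Cons l w)
  show ?case
  proof (cases l)
    case La
    have "bnd (A ** phi A B w) (KA * (KA^na w * KB^nb w))" by (rule bnd_mult[OF assms(1) Cons assms(3)])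
    thus ?thesis using La by (simp add: phi_Cons na_def nb_def mult.assoc)
  next
    case Lb
    have "bnd (B ** phi A B w) (KB * (KA^na w * KB^nb w))" by (rule bnd_mult[OF assms(2) Cons assms(4)])
    thus ?thesis using Lb by (simp add: phi_Cons na_def nb_def algebra_simps)
  qed
qed

lemma bnd_phi_pow:
  assumes "bnd A K" "bnd B K" "0 \<le> K"
  shows "bnd (phi A B w) (K^length w)"
  using bnd_phi[OF assms(1,2,3,3), of w] by (simp add: power_add[symmetric] na_nb)

lemma tr_from_bnd:
  assumes d: "det M = 1" and b: "bnd M K" and L1: "1 \<le> L" and KL: "K \<le> L^2"
  shows "trace M \<le> L + 1/L" "K < L^2 \<Longrightarrow> 1 < L \<Longrightarrow> trace M < L + 1/L"
proof -
  define K' where "K' = max K 1"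
  have b': "bnd M K'" using bnd_mono[OF b] by (simp add: K'_def)
  have K'1: "1 \<le> K'" by (simp add: K'_def)
  have tr: "(trace M)^2 \<le> K' + 1/K' + 2" using bnd_trace[OF d b'] by simp
  have sq: "(L + 1/L)^2 = L^2 + 1/L^2 + 2" using L1 by (simp add: power2_eq_square field_simps)
  have L2: "1 \<le> L^2" using L1 by (simp add: one_le_power)
  have "K' \<le> L^2" using KL L2 by (simp add: K'_def)
  hence "K' + 1/K' \<le> L^2 + 1/L^2" using g_le[OF K'1] by (simp add: power_one_over)
  hence "(trace M)^2 \<le> (L + 1/L)^2" using tr sq by simp
  moreover have "0 \<le> L + 1/L" using L1 by simp
  ultimately show "trace M \<le> L + 1/L" by (rule power2_le_imp_le)
  assume "K < L^2" "1 < L"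
  hence "K' < L^2" using L1 by (simp add: K'_def)
  hence "K' + 1/K' < L^2 + 1/L^2" using g_less[OF K'1] by (simp add: power_one_over)
  hence "(trace M)^2 < (L + 1/L)^2" using tr sq by simp
  moreover have "0 \<le> L + 1/L" using L1 by simp
  ultimately show "trace M < L + 1/L" by (rule power_less_imp_less_base)
qed



lemma alg1:
  fixes a b d e f g t :: real
  assumes "a*d - b^2 = 1" "e*g - f^2 = 1" "a + d = t" "e + g = t"
  shows "(a*e+b*f)^2 + (a*f+b*g)^2 + (b*e+d*f)^2 + (b*f+d*g)^2 = t^2*(a*e + 2*b*f + d*g) - 2*t^2 + 2"
  using assms by algebra

lemma alg2:
  fixes a b d e f g t :: real
  assumes "a*d - b^2 = 1" "e*g - f^2 = 1" "a + d = t" "e + g = t"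
  shows "2*(t^2-2) - 2*(a*e + 2*b*f + d*g) = (a-e)^2 + 2*(b-f)^2 + (d-g)^2"
  using assms by algebra



lemma lam_strict: assumes "2 \<le> t" "t < t'" shows "lam t < lam t'"
proof -
  have "t^2 < t'^2" using assms by (simp add: power_strict_mono)
  hence "sqrt (t^2-4) < sqrt (t'^2-4)" by simp
  hence "t + sqrt (t^2-4) < t' + sqrt (t'^2-4)" using assms by linarith
  thus ?thesis unfolding lam_def by simp
qed

lemma lam_sq: assumes "2 \<le> t" shows "(lam t)^2 + 1/(lam t)^2 = t^2 - 2"
proof -
  have l: "lam t + 1/lam t = t" by (rule lam_sum[OF assms])
  have "lam t \<noteq> 0" using lam_ge1[OF assms] by simp
  hence "(lam t + 1/lam t)^2 = (lam t)^2 + 1/(lam t)^2 + 2" by (simp add: power2_eq_square field_simps)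
  thus ?thesis using l by simp
qed

lemma lam_4: assumes "2 \<le> t" shows "(lam t)^4 + 1/(lam t)^4 = (t^2 - 2)^2 - 2"
proof -
  have l: "(lam t)^2 + 1/(lam t)^2 = t^2 - 2" by (rule lam_sq[OF assms])
  have "lam t \<noteq> 0" using lam_ge1[OF assms] by simp
  hence "((lam t)^2 + 1/(lam t)^2)^2 = (lam t)^4 + 1/(lam t)^4 + 2"
    by (simp add: power2_eq_square field_simps power4_eq_xxxx)
  thus ?thesis using l by simp
qed

lemma sym_bnd:
  fixes M :: "real^2^2"
  assumes s: "M$1$2 = M$2$1" and d: "det M = 1" and t: "2 \<le> trace M"
  shows "bnd M ((lam (trace M))^2)"
proof (rule bnd_of_nu[OF d])
  show "1 \<le> (lam (trace M))^2" using lam_ge1[OF t] by (simp add: one_le_power)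
  have "M$1$1^2 + M$1$2^2 + M$2$1^2 + M$2$2^2 = (M$1$1 + M$2$2)^2 - 2*(M$1$1*M$2$2 - M$1$2*M$2$1)"
    using s by (simp add: power2_eq_square algebra_simps)
  also have "\<dots> = (trace M)^2 - 2" using d by (simp add: det_2 trace2)
  also have "\<dots> = (lam (trace M))^2 + 1/(lam (trace M))^2" using lam_sq[OF t] by simp
  finally show "M$1$1^2 + M$1$2^2 + M$2$1^2 + M$2$2^2 \<le> (lam (trace M))^2 + 1/(lam (trace M))^2" by simp
qed

lemma nu_ge2_real:
  fixes a b c d :: real
  assumes "a*d - b*c = 1"
  shows "2 \<le> a^2 + b^2 + c^2 + d^2"
proof -
  have "a^2 + b^2 + c^2 + d^2 = (a - d)^2 + (b + c)^2 + 2*(a*d - b*c)"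
    by (simp add: power2_eq_square algebra_simps)
  also have "\<dots> = (a - d)^2 + (b + c)^2 + 2" using assms by simp
  finally show ?thesis by (simp add: add_nonneg_nonneg)
qed

lemma nu_ge2:
  fixes M :: "real^2^2"
  assumes "det M = 1"
  shows "2 \<le> M$1$1^2 + M$1$2^2 + M$2$1^2 + M$2$2^2"
  using nu_ge2_real[of "M$1$1" "M$2$2" "M$1$2" "M$2$1"] assms by (simp add: det_2)

lemma prod_strict:
  fixes A B :: "real^2^2"
  assumes sA: "A$1$2 = A$2$1" and sB: "B$1$2 = B$2$1" and dA: "det A = 1" and dB: "det B = 1"
    and tA: "trace A = t" and tB: "trace B = t" and t2: "2 < t" and ne: "A \<noteq> B"
  shows "\<exists>K2. bnd (A ** B) K2 \<and> bnd (B ** A) K2 \<and> K2 < (lam t)^4"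
proof -
  define a where "a = A$1$1"
  define b where "b = A$1$2"
  define d where "d = A$2$2"
  define e where "e = B$1$1"
  define f where "f = B$1$2"
  define g where "g = B$2$2"
  have A21: "A$2$1 = b" using sA b_def by simp
  have B21: "B$2$1 = f" using sB f_def by simp
  have h1: "a*d - b^2 = 1" using dA by (simp add: det_2 a_def b_def d_def A21 power2_eq_square)
  have h2: "e*g - f^2 = 1" using dB by (simp add: det_2 e_def f_def g_def B21 power2_eq_square)
  have h3: "a + d = t" using tA by (simp add: trace2 a_def d_def)
  have h4: "e + g = t" using tB by (simp add: trace2 e_def g_def)
  define nu where "nu = (a*e+b*f)^2 + (a*f+b*g)^2 + (b*e+d*f)^2 + (b*f+d*g)^2"
  have nuAB: "(A**B)$1$1^2 + (A**B)$1$2^2 + (A**B)$2$1^2 + (A**B)$2$2^2 = nu"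
    by (simp add: mm_entries nu_def a_def b_def d_def e_def f_def g_def A21 B21)
  have tr: "(B**A)$1$1 = (A**B)$1$1" "(B**A)$1$2 = (A**B)$2$1" "(B**A)$2$1 = (A**B)$1$2" "(B**A)$2$2 = (A**B)$2$2"
    by (simp_all add: mm_entries sA sB mult.commute)
  have nuBA: "(B**A)$1$1^2 + (B**A)$1$2^2 + (B**A)$2$1^2 + (B**A)$2$2^2 = nu"
    using nuAB unfolding tr by simp
  have dAB: "det (A**B) = 1" "det (B**A) = 1" using dA dB by (simp_all add: det_mul)
  have nu2: "2 \<le> nu" using nu_ge2[OF dAB(1)] nuAB by simp
  define K2 where "K2 = lam nu"
  have K21: "1 \<le> K2" using lam_ge1[OF nu2] by (simp add: K2_def)
  have K2s: "K2 + 1/K2 = nu" using lam_sum[OF nu2] by (simp add: K2_def)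
  have b1: "bnd (A**B) K2" by (rule bnd_of_nu[OF dAB(1) K21]) (simp add: nuAB K2s)
  have b2: "bnd (B**A) K2" by (rule bnd_of_nu[OF dAB(2) K21]) (simp add: nuBA K2s)
  have e1: "nu = t^2*(a*e + 2*b*f + d*g) - 2*t^2 + 2" unfolding nu_def by (rule alg1[OF h1 h2 h3 h4])
  have e2: "2*(t^2-2) - 2*(a*e + 2*b*f + d*g) = (a-e)^2 + 2*(b-f)^2 + (d-g)^2" by (rule alg2[OF h1 h2 h3 h4])
  have "a \<noteq> e \<or> b \<noteq> f \<or> d \<noteq> g"
    using ne by (auto simp: mat2_eq_iff a_def b_def d_def e_def f_def g_def A21 B21)
  hence "(a-e)^2 > 0 \<or> (b-f)^2 > 0 \<or> (d-g)^2 > 0" by auto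
  moreover have "(a-e)^2 \<ge> 0" "(b-f)^2 \<ge> 0" "(d-g)^2 \<ge> 0" by simp_all
  ultimately have "(a-e)^2 + 2*(b-f)^2 + (d-g)^2 > 0" by linarith
  hence T: "a*e + 2*b*f + d*g < t^2 - 2" using e2 by simp
  have t20: "t^2 > 0" using t2 by simp
  have "nu < t^2*(t^2-2) - 2*t^2 + 2" using e1 T t20 by simp
  also have "\<dots> = (lam t)^4 + 1/(lam t)^4" using lam_4[of t] t2 by (simp add: power2_eq_square algebra_simps)
  finally have nuless: "nu < (lam t)^4 + 1/(lam t)^4" .
  have "K2 < (lam t)^4"
  proof (rule ccontr)
    assume "\<not> K2 < (lam t)^4"
    hence "(lam t)^4 \<le> K2" by simp
    moreover have "1 \<le> (lam t)^4" using lam_ge1[of t] t2 by (simp add: one_le_power)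
    ultimately have "(lam t)^4 + 1/(lam t)^4 \<le> K2 + 1/K2" using g_le by blast
    thus False using K2s nuless by simp
  qed
  thus ?thesis using b1 b2 by blast
qed

lemma bnd_nonneg: assumes "bnd M K" shows "0 \<le> K"
proof -
  have "(M$1$1*1 + M$1$2*0)^2 + (M$2$1*1 + M$2$2*0)^2 \<le> K*(1^2+0^2)"
    using assms unfolding bnd_def by blast
  hence h1: "(M$1$1)^2 + (M$2$1)^2 \<le> K" by simp
  have h2: "0 \<le> (M$1$1)^2 + (M$2$1)^2" by simp
  show ?thesis using order_trans[OF h2 h1] .
qed

lemma split_adj: "La \<in> set w \<Longrightarrow> Lb \<in> set w \<Longrightarrow> \<exists>u x y v. x \<noteq> y \<and> w = u @ x # y # v"
proof (induction w)
  case Nil thus ?case by simp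
next
  case (Cons l w)
  show ?case
  proof (cases w)
    case Nil thus ?thesis using Cons.prems by simp
  next
    case (Cons m w')
    show ?thesis
    proof (cases "l = m")
      case False thus ?thesis using Cons by (metis append_Nil)
    next
      case True
      hence "La \<in> set w" "Lb \<in> set w" using Cons.prems \<open>w = m # w'\<close> by auto
      then obtain u x y v where "x \<noteq> y" "w = u @ x # y # v" using Cons.IH by blast
      thus ?thesis by (metis append_Cons)
    qed
  qed
qed

lemma not_rep_mem: "w \<noteq> replicate (length w) c \<Longrightarrow> \<exists>x\<in>set w. x \<noteq> c"
  using replicate_length_same by metis

lemma key_sym:
  fixes A B :: "real^2^2"
  assumes sA: "A$1$2 = A$2$1" and sB: "B$1$2 = B$2$1" and dA: "det A = 1" and dB: "det B = 1"
    and tA: "2 < trace A" and tAB: "trace A \<le> trace B" and nc: "A ** B \<noteq> B ** A"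
    and w: "w \<noteq> []"
  shows "trace (phi A B w) \<le> trace (phi A B (replicate (length w) Lb))"
    "trace (phi A B w) = trace (phi A B (replicate (length w) Lb)) \<Longrightarrow>
       w = replicate (length w) Lb \<or> (trace A = trace B \<and> w = replicate (length w) La)"
proof -
  define n where "n = length w"
  have n0: "0 < n" using w by (simp add: n_def)
  define lA where "lA = lam (trace A)"
  define lB where "lB = lam (trace B)"
  have tB: "2 < trace B" using tA tAB by simp
  have lB1: "1 < lB" using lam_gt1[OF tB] by (simp add: lB_def)
  have lA1: "1 \<le> lA" using lam_ge1 tA by (simp add: lA_def)
  have lAB: "lA \<le> lB" using lam_mono tA tAB by (simp add: lA_def lB_def)
  have bA: "bnd A (lA^2)" using sym_bnd[OF sA dA] tA by (simp add: lA_def)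
  have bB: "bnd B (lB^2)" using sym_bnd[OF sB dB] tB by (simp add: lB_def)
  define L where "L = lB^n"
  have L1: "1 < L" using lB1 n0 by (simp add: L_def)
  have trb: "trace (phi A B (replicate n Lb)) = L + 1/L"
    using trace_pow[where L=B and l=Lb and A=A and B=B and n=n] dB tB by (simp add: L_def lB_def power_one_over)
  have dw: "det (phi A B w) = 1" by (rule det_phi[OF dA dB])
  define K where "K = (lA^2)^na w * (lB^2)^nb w"
  have bw: "bnd (phi A B w) K" unfolding K_def by (rule bnd_phi[OF bA bB]) simp_all
  have pn: "(lB^2)^n = L^2" unfolding L_def by (metis power_mult mult.commute)
  have LL: "L^2 = (lB^2)^na w * (lB^2)^nb w"
  proof -
    have "(lB^2)^na w * (lB^2)^nb w = (lB^2)^(na w + nb w)" by (rule power_add[symmetric])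
    also have "\<dots> = (lB^2)^n" by (simp only: na_nb n_def)
    finally show ?thesis using pn by simp
  qed
  have KL: "K \<le> L^2" unfolding K_def LL
    using lAB lA1 by (intro mult_right_mono power_mono) simp_all
  show "trace (phi A B w) \<le> trace (phi A B (replicate (length w) Lb))"
    using tr_from_bnd(1)[OF dw bw less_imp_le[OF L1] KL] trb by (simp add: n_def)
  assume eq: "trace (phi A B w) = trace (phi A B (replicate (length w) Lb))"
  show "w = replicate (length w) Lb \<or> (trace A = trace B \<and> w = replicate (length w) La)"
  proof (rule ccontr)
    assume neg: "\<not> (w = replicate (length w) Lb \<or> (trace A = trace B \<and> w = replicate (length w) La))"
    have nLb: "w \<noteq> replicate (length w) Lb" using neg by simp
    have nLa: "trace A = trace B \<Longrightarrow> w \<noteq> replicate (length w) La" using neg by simp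
    have strict: "\<exists>K'. bnd (phi A B w) K' \<and> K' < L^2"
    proof (cases "trace A < trace B")
      case True
      have "lA < lB" using lam_strict tA True by (simp add: lA_def lB_def)
      hence ls: "lA^2 < lB^2" using lA1 by (simp add: power_strict_mono)
      obtain x where x: "x \<in> set w" "x \<noteq> Lb" using not_rep_mem[OF nLb] by blast
      have "x = La" using x(2) by (cases x) auto
      hence "La \<in> set w" using x(1) by simp
      hence "filter (\<lambda>l. l = La) w \<noteq> []" by (simp add: filter_empty_conv)
      hence "na w > 0" by (simp add: na_def)
      hence "(lA^2)^na w < (lB^2)^na w" using power_strict_mono[OF ls, of "na w"] lA1 by simp
      hence "K < L^2" unfolding K_def LL using lB1 by (intro mult_strict_right_mono) simp_all
      thus ?thesis using bw by blast
    next
      case False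
      hence teq: "trace A = trace B" using tAB by simp
      hence lAB': "lA = lB" by (simp add: lA_def lB_def)
      obtain x where x: "x \<in> set w" "x \<noteq> Lb" using not_rep_mem[OF nLb] by blast
      have "x = La" using x(2) by (cases x) auto
      hence iA: "La \<in> set w" using x(1) by simp
      obtain y where y: "y \<in> set w" "y \<noteq> La" using not_rep_mem[OF nLa[OF teq]] by blast
      have "y = Lb" using y(2) by (cases y) auto
      hence iB: "Lb \<in> set w" using y(1) by simp
      obtain u x y v where xy: "x \<noteq> y" and wsp: "w = u @ x # y # v" using split_adj[OF iA iB] by blast
      have ne: "A \<noteq> B" using nc by auto
      obtain K2 where K2: "bnd (A**B) K2" "bnd (B**A) K2" "K2 < (lam (trace B))^4"
        using prod_strict[OF sA sB dA dB teq refl tB ne] by blast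
      define K0 where "K0 = lB^2"
      have K00: "0 < K0" using lB1 by (simp add: K0_def)
      have bA': "bnd A K0" using bA lAB' by (simp add: K0_def)
      have bB': "bnd B K0" using bB by (simp add: K0_def)
      have bu: "bnd (phi A B u) (K0^length u)" by (rule bnd_phi_pow[OF bA' bB']) (use K00 in simp)
      have bv: "bnd (phi A B v) (K0^length v)" by (rule bnd_phi_pow[OF bA' bB']) (use K00 in simp)
      have bxy: "bnd (phi A B [x, y]) K2"
        using xy K2 by (cases x; cases y) (simp_all add: phi_Cons phi_Nil matrix_mul_rid)
      have pw: "phi A B w = phi A B u ** (phi A B [x, y] ** phi A B v)"
        using wsp phi_append[of A B u "[x,y] @ v"] phi_append[of A B "[x,y]" v] by simp
      have K2pos: "0 \<le> K2" by (rule bnd_nonneg[OF bxy])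
      have bw2: "bnd (phi A B w) (K0^length u * (K2 * K0^length v))"
        unfolding pw by (intro bnd_mult bu bxy bv) (simp_all add: K2pos K00 less_imp_le)
      have K04: "K0^2 = lam (trace B) ^ 4" unfolding K0_def lB_def by (simp flip: power_mult)
      have "K2 * K0^length v < K0^2 * K0^length v"
        using K2(3) K00 K04 by (intro mult_strict_right_mono) simp_all
      hence "K0^length u * (K2 * K0^length v) < K0^length u * (K0^2 * K0^length v)"
        using K00 by (intro mult_strict_left_mono) simp_all
      also have "\<dots> = K0^(length u + 2 + length v)" by (simp only: power_add mult.assoc)
      also have "length u + 2 + length v = n" using wsp n_def by simp
      also have "K0^n = L^2" using pn by (simp add: K0_def)
      finally show ?thesis using bw2 by blast
    qed
    then obtain K' where "bnd (phi A B w) K'" "K' < L^2" by blast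
    hence "trace (phi A B w) < L + 1/L"
      using tr_from_bnd(2)[OF dw _ less_imp_le[OF L1]] L1 by simp
    thus False using eq trb by (simp add: n_def)
  qed
qed



lemma a1: fixes a b mu k C S :: real
  shows "b = k * C \<Longrightarrow> mu - a = k * S \<Longrightarrow> k * (a * C + b * S - mu * C) = 0" by algebra
lemma a2: fixes a b c dd mu k C S :: real
  shows "b = k * C \<Longrightarrow> mu - a = k * S \<Longrightarrow> a*dd - b*c = 1 \<Longrightarrow> mu^2 - (a + dd) * mu + 1 = 0 \<Longrightarrow> k * (c * C + dd * S - mu * S) = 0" by algebra
lemma a3: fixes a b c dd mu k C S :: real
  shows "mu - dd = k * C \<Longrightarrow> c = k * S \<Longrightarrow> a*dd - b*c = 1 \<Longrightarrow> mu^2 - (a + dd) * mu + 1 = 0 \<Longrightarrow> k * (a * C + b * S - mu * C) = 0" by algebra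
lemma a3b: fixes c dd mu k C S :: real
  shows "mu - dd = k * C \<Longrightarrow> c = k * S \<Longrightarrow> k * (c * C + dd * S - mu * S) = 0" by algebra
lemma a4: fixes a b c dd l C S :: real
  shows "a * C + b * S = l * C \<Longrightarrow> c * C + dd * S = l * S \<Longrightarrow> S^2 + C^2 = 1 \<Longrightarrow> a*dd - b*c = 1 \<Longrightarrow> l^2 - (a + dd) * l + 1 = 0" by algebra
lemma a5: fixes a b l C1 S1 C2 S2 :: real
  shows "a * C1 + b * S1 = l * C1 \<Longrightarrow> a * C2 + b * S2 = l * C2 \<Longrightarrow> (a - l) * (C1 * S2 - S1 * C2) = 0" by algebra
lemma a6: fixes a b l C1 S1 C2 S2 :: real
  shows "a * C1 + b * S1 = l * C1 \<Longrightarrow> a * C2 + b * S2 = l * C2 \<Longrightarrow> b * (C1 * S2 - S1 * C2) = 0" by algebra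
lemma a5': fixes c dd l C1 S1 C2 S2 :: real
  shows "c * C1 + dd * S1 = l * S1 \<Longrightarrow> c * C2 + dd * S2 = l * S2 \<Longrightarrow> c * (C1 * S2 - S1 * C2) = 0" by algebra
lemma a6': fixes c dd l C1 S1 C2 S2 :: real
  shows "c * C1 + dd * S1 = l * S1 \<Longrightarrow> c * C2 + dd * S2 = l * S2 \<Longrightarrow> (dd - l) * (C1 * S2 - S1 * C2) = 0" by algebra
lemma a7: fixes a b c dd u v :: real
  shows "c * u^2 + (dd - a) * u - b = 0 \<Longrightarrow> c * v^2 + (dd - a) * v - b = 0 \<Longrightarrow> (u - v) * (c * (u + v) + (dd - a)) = 0" by algebra
lemma a8: fixes a b c dd u v :: real
  shows "c * u^2 + (dd - a) * u - b = 0 \<Longrightarrow> c * (u + v) + (dd - a) = 0 \<Longrightarrow> c * u * v + b = 0" by algebra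
lemma a9: fixes a b l u C S :: real shows "a*C + b*S = l*C \<Longrightarrow> C = u*S \<Longrightarrow> S*(a*u + b - l*u) = 0" by algebra
lemma a10: fixes c dd l u C S :: real shows "c*C + dd*S = l*S \<Longrightarrow> C = u*S \<Longrightarrow> S*(c*u + dd - l) = 0" by algebra
lemma a11: fixes a b c dd l u :: real shows "a*u + b - l*u = 0 \<Longrightarrow> c*u + dd - l = 0 \<Longrightarrow> c*u^2 + (dd - a)*u - b = 0" by algebra

lemma vec2_eq: "(v::real^2) = w \<longleftrightarrow> v$1 = w$1 \<and> v$2 = w$2"
  by (auto simp: vec_eq_iff forall_2)

lemma eig_iff:
  fixes M :: "real^2^2"
  shows "M *v dir t = l *\<^sub>R dir t \<longleftrightarrow>
    M$1$1 * cos t + M$1$2 * sin t = l * cos t \<and> M$2$1 * cos t + M$2$2 * sin t = l * sin t"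
  by (simp add: vec2_eq mv_entries dir_entries)

lemma angle_pos:
  fixes p q :: real
  assumes q: "q > 0"
  shows "\<exists>t. 0 < t \<and> t < pi \<and> p = sqrt (p^2+q^2) * cos t \<and> q = sqrt (p^2+q^2) * sin t"
proof -
  define r where "r = sqrt (p^2+q^2)"
  have pq: "p^2 + q^2 > 0" using q by (simp add: add_nonneg_pos)
  hence r0: "r > 0" by (simp add: r_def)
  have r2: "r^2 = p^2 + q^2" using pq by (simp add: r_def)
  have "p^2 < r^2" using r2 q by simp
  hence "\<bar>p\<bar>^2 < r^2" by simp
  hence "\<bar>p\<bar> < r" using power2_less_imp_less r0 by fastforce
  hence pr: "-r < p" "p < r" by auto
  have b1: "-1 < p/r" using pr r0 by (simp add: field_simps)
  have b2: "p/r < 1" using pr r0 by (simp add: field_simps)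
  define t where "t = arccos (p/r)"
  have tb: "0 < t \<and> t < pi" using arccos_lt_bounded[OF b1 b2] by (simp add: t_def)
  have ct: "cos t = p/r" using b1 b2 by (simp add: t_def)
  have st: "sin t = sqrt (1 - (p/r)^2)" using b1 b2 by (simp add: t_def sin_arccos)
  have "(p/r)^2 + (q/r)^2 = (p^2+q^2)/r^2" by (simp add: power_divide add_divide_distrib)
  also have "\<dots> = 1"
  proof -
    have nz: "p^2 + q^2 \<noteq> 0" using pq by linarith
    show ?thesis unfolding r2 by (rule divide_self[OF nz])
  qed
  finally have "1 - (p/r)^2 = (q/r)^2" by linarith
  hence "sin t = q/r" using st q r0 by simp
  hence "q = r * sin t" using r0 by simp
  moreover have "p = r * cos t" using ct r0 by simp
  ultimately show ?thesis using tb unfolding r_def by blast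
qed

lemma angle_of:
  fixes p q :: real
  assumes "p \<noteq> 0 \<or> q \<noteq> 0"
  shows "\<exists>t\<in>P1. \<exists>k. k \<noteq> 0 \<and> p = k * cos t \<and> q = k * sin t"
proof (cases "q = 0")
  case True
  hence "p \<noteq> 0" using assms by simp
  moreover have "(0::real) \<in> P1" by (simp add: P1_def)
  ultimately show ?thesis using True by force
next
  case False
  show ?thesis
  proof (cases "q > 0")
    case True
    obtain t where t: "0 < t" "t < pi" "p = sqrt (p^2+q^2) * cos t" "q = sqrt (p^2+q^2) * sin t"
      using angle_pos[OF True] by blast
    have "sqrt (p^2+q^2) \<noteq> 0" using True by (simp add: add_nonneg_pos)
    moreover have "t \<in> P1" using t by (simp add: P1_def)
    ultimately show ?thesis using t by blast
  next
    case False'': False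
    hence qn: "-q > 0" using False by simp
    obtain t where t: "0 < t" "t < pi" "-p = sqrt ((-p)^2+(-q)^2) * cos t" "-q = sqrt ((-p)^2+(-q)^2) * sin t"
      using angle_pos[OF qn, of "-p"] by blast
    have "sqrt ((-p)^2+(-q)^2) \<noteq> 0" using qn by (simp add: add_nonneg_pos)
    hence "- sqrt ((-p)^2+(-q)^2) \<noteq> 0" by simp
    moreover have "t \<in> P1" using t by (simp add: P1_def)
    moreover have "p = (- sqrt ((-p)^2+(-q)^2)) * cos t" "q = (- sqrt ((-p)^2+(-q)^2)) * sin t"
      using t(3,4) by linarith+
    ultimately show ?thesis by blast
  qed
qed

lemma eig_vec:
  fixes M :: "real^2^2"
  assumes d: "det M = 1" and t: "2 < trace M" and mu: "mu^2 - trace M * mu + 1 = 0"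
  shows "\<exists>t\<in>P1. M *v dir t = mu *\<^sub>R dir t"
proof -
  define a where "a = M$1$1"
  define b where "b = M$1$2"
  define c where "c = M$2$1"
  define dd where "dd = M$2$2"
  have det: "a*dd - b*c = 1" using d by (simp add: det_2 a_def b_def c_def dd_def)
  have tr: "mu^2 - (a + dd) * mu + 1 = 0" using mu by (simp add: trace2 a_def dd_def)
  have goal: "\<exists>t\<in>P1. a * cos t + b * sin t = mu * cos t \<and> c * cos t + dd * sin t = mu * sin t"
  proof (cases "b \<noteq> 0 \<or> mu - a \<noteq> 0")
    case True
    then obtain t k where tk: "t \<in> P1" "k \<noteq> 0" "b = k * cos t" "mu - a = k * sin t"
      using angle_of by blast
    have e1: "k * (a * cos t + b * sin t - mu * cos t) = 0" by (rule a1[OF tk(3,4)])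
    have e2: "k * (c * cos t + dd * sin t - mu * sin t) = 0" by (rule a2[OF tk(3,4) det tr])
    show ?thesis using e1 e2 tk by auto
  next
    case False
    hence b0: "b = 0" and ma: "mu = a" by auto
    show ?thesis
    proof (cases "mu - dd \<noteq> 0 \<or> c \<noteq> 0")
      case True
      then obtain t k where tk: "t \<in> P1" "k \<noteq> 0" "mu - dd = k * cos t" "c = k * sin t"
        using angle_of by blast
      have e1: "k * (a * cos t + b * sin t - mu * cos t) = 0" by (rule a3[OF tk(3,4) det tr])
      have e2: "k * (c * cos t + dd * sin t - mu * sin t) = 0" by (rule a3b[OF tk(3,4)])
      show ?thesis using e1 e2 tk by auto
    next
      case False
      hence "dd = mu" "c = 0" by auto
      hence "mu * mu = 1" "trace M = 2 * mu" using det b0 ma by (simp_all add: trace2 a_def dd_def)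
      hence "mu > 1" "mu * mu = 1" using t by auto
      moreover have "mu * mu > 1 * 1" using \<open>mu > 1\<close> by (intro mult_strict_mono) auto
      ultimately show ?thesis by simp
    qed
  qed
  thus ?thesis by (simp add: eig_iff a_def b_def c_def dd_def)
qed

lemma eig_poly:
  fixes M :: "real^2^2"
  assumes d: "det M = 1" and e: "M *v dir t = l *\<^sub>R dir t"
  shows "l^2 - trace M * l + 1 = 0"
proof -
  define a where "a = M$1$1"
  define b where "b = M$1$2"
  define c where "c = M$2$1"
  define dd where "dd = M$2$2"
  have det: "a*dd - b*c = 1" using d by (simp add: det_2 a_def b_def c_def dd_def)
  have e1: "a * cos t + b * sin t = l * cos t" and e2: "c * cos t + dd * sin t = l * sin t"
    using e by (simp_all add: eig_iff a_def b_def c_def dd_def)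
  have sc: "(sin t)^2 + (cos t)^2 = 1" by simp
  have "l^2 - (a + dd) * l + 1 = 0" by (rule a4[OF e1 e2 sc det])
  thus ?thesis by (simp add: trace2 a_def dd_def)
qed

lemma eig_cross:
  fixes M :: "real^2^2"
  assumes d: "det M = 1" and t: "2 < trace M"
    and e1: "M *v dir t1 = l *\<^sub>R dir t1" and e2: "M *v dir t2 = l *\<^sub>R dir t2"
  shows "cos t1 * sin t2 - sin t1 * cos t2 = 0"
proof -
  define a where "a = M$1$1"
  define b where "b = M$1$2"
  define c where "c = M$2$1"
  define dd where "dd = M$2$2"
  have det: "a*dd - b*c = 1" using d by (simp add: det_2 a_def b_def c_def dd_def)
  have tr: "2 < a + dd" using t by (simp add: trace2 a_def dd_def)
  have f1: "a * cos t1 + b * sin t1 = l * cos t1" "c * cos t1 + dd * sin t1 = l * sin t1"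
    using e1 by (simp_all add: eig_iff a_def b_def c_def dd_def)
  have f2: "a * cos t2 + b * sin t2 = l * cos t2" "c * cos t2 + dd * sin t2 = l * sin t2"
    using e2 by (simp_all add: eig_iff a_def b_def c_def dd_def)
  define X where "X = cos t1 * sin t2 - sin t1 * cos t2"
  have x1: "(a - l) * X = 0" unfolding X_def by (rule a5[OF f1(1) f2(1)])
  have x2: "b * X = 0" unfolding X_def by (rule a6[OF f1(1) f2(1)])
  have x3: "c * X = 0" unfolding X_def by (rule a5'[OF f1(2) f2(2)])
  have x4: "(dd - l) * X = 0" unfolding X_def by (rule a6'[OF f1(2) f2(2)])
  show ?thesis
  proof (rule ccontr)
    assume "\<not> ?thesis"
    hence "X \<noteq> 0" by (simp add: X_def)
    hence "a = l" "b = 0" "c = 0" "dd = l" using x1 x2 x3 x4 by auto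
    hence "l * l = 1" "2 < 2 * l" using det tr by auto
    hence "l > 1" "l * l = 1" by auto
    moreover have "l * l > 1 * 1" using \<open>l > 1\<close> by (intro mult_strict_mono) auto
    ultimately show False by simp
  qed
qed

lemma angle_eq:
  assumes "t1 \<in> P1" "t2 \<in> P1" "cos t1 * sin t2 - sin t1 * cos t2 = 0"
  shows "t1 = t2"
proof -
  have "sin (t2 - t1) = 0" using assms(3) by (simp add: sin_diff algebra_simps)
  moreover have "- pi < t2 - t1" "t2 - t1 < pi" using assms(1,2) by (auto simp: P1_def)
  ultimately have "t2 - t1 = 0" using sin_eq_0_pi by blast
  thus ?thesis by simp
qed

lemma lam_poly: assumes "2 \<le> t" shows "(lam t)^2 - t * lam t + 1 = 0"
  using lam_inv[OF assms] by (simp add: power2_eq_square algebra_simps)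

lemma roots:
  assumes t: "2 < t" and l: "l^2 - t * l + 1 = 0"
  shows "l = lam t \<or> l = t - lam t"
proof -
  have "(l - lam t) * (l - (t - lam t)) = l^2 - t*l + lam t * (t - lam t)"
    by (simp add: power2_eq_square algebra_simps)
  also have "\<dots> = 0" using l lam_inv[of t] t by simp
  finally show ?thesis by simp
qed

lemma small_root: assumes t: "2 < t" shows "0 < t - lam t" "t - lam t < 1"
proof -
  have i: "lam t * (t - lam t) = 1" using lam_inv[of t] t by simp
  have g: "1 < lam t" using lam_gt1[OF t] .
  show "0 < t - lam t" using i g zero_less_mult_pos[of "lam t" "t - lam t"] by simp
  show "t - lam t < 1"
  proof (rule ccontr)
    assume "\<not> t - lam t < 1"
    hence "1 * 1 < lam t * (t - lam t)" using g by (intro mult_less_le_imp_less) simp_all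
    thus False using i by simp
  qed
qed

lemma eig_l_big:
  fixes M :: "real^2^2"
  assumes d: "det M = 1" and t: "2 < trace M" and e: "M *v dir th = l *\<^sub>R dir th" and l: "\<bar>l\<bar> > 1"
  shows "l = lam (trace M)"
  using roots[OF t eig_poly[OF d e]] small_root[OF t] l by auto

lemma eig_l_small:
  fixes M :: "real^2^2"
  assumes d: "det M = 1" and t: "2 < trace M" and e: "M *v dir th = l *\<^sub>R dir th" and l: "\<bar>l\<bar> < 1"
  shows "l = trace M - lam (trace M)"
  using roots[OF t eig_poly[OF d e]] lam_gt1[OF t] l by auto

lemma attr_char:
  fixes M :: "real^2^2"
  assumes d: "det M = 1" and t: "2 < trace M"
  shows "attr_fp M \<in> P1 \<and> (\<exists>l. \<bar>l\<bar> > 1 \<and> M *v dir (attr_fp M) = l *\<^sub>R dir (attr_fp M))"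
proof -
  let ?P = "\<lambda>th. th \<in> P1 \<and> (\<exists>l. \<bar>l\<bar> > 1 \<and> M *v dir th = l *\<^sub>R dir th)"
  have ex: "\<exists>th. ?P th"
  proof -
    obtain th where "th \<in> P1" "M *v dir th = lam (trace M) *\<^sub>R dir th"
      using eig_vec[OF d t lam_poly] t by auto
    moreover have "\<bar>lam (trace M)\<bar> > 1" using lam_gt1[OF t] by simp
    ultimately show ?thesis by blast
  qed
  have un: "th1 = th2" if P1': "?P th1" and P2': "?P th2" for th1 th2
  proof -
    obtain l1 where l1: "\<bar>l1\<bar> > 1" "M *v dir th1 = l1 *\<^sub>R dir th1" using P1' by blast
    obtain l2 where l2: "\<bar>l2\<bar> > 1" "M *v dir th2 = l2 *\<^sub>R dir th2" using P2' by blast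
    have "l1 = l2" using eig_l_big[OF d t l1(2) l1(1)] eig_l_big[OF d t l2(2) l2(1)] by simp
    hence "cos th1 * sin th2 - sin th1 * cos th2 = 0" using eig_cross[OF d t l1(2)] l2(2) by simp
    thus ?thesis using angle_eq P1' P2' by blast
  qed
  have "\<exists>!th. ?P th" using ex un by blast
  hence "?P (THE th. ?P th)" by (rule theI')
  thus ?thesis unfolding attr_fp_def .
qed

lemma rep_char:
  fixes M :: "real^2^2"
  assumes d: "det M = 1" and t: "2 < trace M"
  shows "rep_fp M \<in> P1 \<and> (\<exists>l. \<bar>l\<bar> < 1 \<and> M *v dir (rep_fp M) = l *\<^sub>R dir (rep_fp M))"
proof -
  let ?P = "\<lambda>th. th \<in> P1 \<and> (\<exists>l. \<bar>l\<bar> < 1 \<and> M *v dir th = l *\<^sub>R dir th)"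
  have mp: "(trace M - lam (trace M))^2 - trace M * (trace M - lam (trace M)) + 1 = 0"
    using lam_poly[of "trace M"] t by (simp add: power2_eq_square algebra_simps)
  have ex: "\<exists>th. ?P th"
  proof -
    obtain th where "th \<in> P1" "M *v dir th = (trace M - lam (trace M)) *\<^sub>R dir th"
      using eig_vec[OF d t mp] by auto
    moreover have "\<bar>trace M - lam (trace M)\<bar> < 1" using small_root[OF t] by simp
    ultimately show ?thesis by blast
  qed
  have un: "th1 = th2" if P1': "?P th1" and P2': "?P th2" for th1 th2
  proof -
    obtain l1 where l1: "\<bar>l1\<bar> < 1" "M *v dir th1 = l1 *\<^sub>R dir th1" using P1' by blast
    obtain l2 where l2: "\<bar>l2\<bar> < 1" "M *v dir th2 = l2 *\<^sub>R dir th2" using P2' by blast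
    have "l1 = l2" using eig_l_small[OF d t l1(2) l1(1)] eig_l_small[OF d t l2(2) l2(1)] by simp
    hence "cos th1 * sin th2 - sin th1 * cos th2 = 0" using eig_cross[OF d t l1(2)] l2(2) by simp
    thus ?thesis using angle_eq P1' P2' by blast
  qed
  have "\<exists>!th. ?P th" using ex un by blast
  hence "?P (THE th. ?P th)" by (rule theI')
  thus ?thesis unfolding rep_fp_def .
qed

lemma eig_root0:
  fixes M :: "real^2^2"
  assumes "M *v dir 0 = l *\<^sub>R dir 0"
  shows "M$2$1 = 0"
  using assms by (simp add: eig_iff)

lemma eig_root:
  fixes M :: "real^2^2"
  assumes th: "th \<in> P1" "th \<noteq> 0" and e: "M *v dir th = l *\<^sub>R dir th"
  shows "M$2$1 * (cot th)^2 + (M$2$2 - M$1$1) * cot th - M$1$2 = 0 \<and> l = M$2$1 * cot th + M$2$2"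
proof -
  define a where "a = M$1$1"
  define b where "b = M$1$2"
  define c where "c = M$2$1"
  define dd where "dd = M$2$2"
  have e1: "a * cos th + b * sin th = l * cos th" and e2: "c * cos th + dd * sin th = l * sin th"
    using e by (simp_all add: eig_iff a_def b_def c_def dd_def)
  have s0: "sin th > 0" using th by (intro sin_gt_zero) (auto simp: P1_def)
  define u where "u = cot th"
  have C: "cos th = u * sin th" using s0 by (simp add: u_def cot_def)
  have "sin th * (a * u + b - l * u) = 0" by (rule a9[OF e1 C])
  hence g1: "a * u + b - l * u = 0" using s0 by simp
  have "sin th * (c * u + dd - l) = 0" by (rule a10[OF e2 C])
  hence g2: "c * u + dd - l = 0" using s0 by simp
  have "c * u^2 + (dd - a) * u - b = 0" by (rule a11[OF g1 g2])
  thus ?thesis using g2 by (simp add: u_def a_def b_def c_def dd_def)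
qed

lemma axis_cond:
  fixes M :: "real^2^2"
  assumes d: "det M = 1" and t: "2 < trace M" and z: "z \<in> translation_axis M"
  shows "0 < Im z \<and> M$2$1 * ((Re z)^2 + (Im z)^2) + (M$2$2 - M$1$1) * Re z - M$1$2 = 0"
proof -
  define p where "p = rep_fp M"
  define q where "q = attr_fp M"
  obtain l1 where p: "p \<in> P1" "\<bar>l1\<bar> < 1" "M *v dir p = l1 *\<^sub>R dir p"
    using rep_char[OF d t] by (auto simp: p_def)
  obtain l2 where q: "q \<in> P1" "\<bar>l2\<bar> > 1" "M *v dir q = l2 *\<^sub>R dir q"
    using attr_char[OF d t] by (auto simp: q_def)
  have pq: "p \<noteq> q"
  proof
    assume "p = q"
    have e2': "M *v dir p = l2 *\<^sub>R dir p" using q(3) \<open>p = q\<close> by simp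
    have "l1 *\<^sub>R dir p = M *v dir p" using p(3) by (rule sym)
    also have "\<dots> = l2 *\<^sub>R dir p" by (rule e2')
    finally have eq: "l1 *\<^sub>R dir p = l2 *\<^sub>R dir p" .
    have dn: "dir p \<noteq> 0"
    proof
      assume "dir p = 0"
      hence "cos p = 0" "sin p = 0" using dir_entries[of p] by simp_all
      moreover have "(sin p)^2 + (cos p)^2 = 1" by simp
      ultimately show False by simp
    qed
    have "l1 = l2" using eq dn by simp
    thus False using p(2) q(2) by simp
  qed
  define x where "x = Re z"
  define y where "y = Im z"
  have zz: "z \<in> geodesic p q" using z by (simp add: translation_axis_def p_def q_def)
  show ?thesis
  proof (cases "p = 0")
    case True
    have c0: "M$2$1 = 0" using p(3) unfolding True by (rule eig_root0)
    have "q \<noteq> 0" using pq True by simp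
    hence r: "M$2$1 * (cot q)^2 + (M$2$2 - M$1$1) * cot q - M$1$2 = 0" using eig_root[OF q(1) _ q(3)] by simp
    have "0 < Im z" "Re z = cot q" using zz True by (auto simp: geodesic_def)
    thus ?thesis using r c0 by simp
  next
    case False
    show ?thesis
    proof (cases "q = 0")
      case True
      have c0: "M$2$1 = 0" using q(3) unfolding True by (rule eig_root0)
      have r: "M$2$1 * (cot p)^2 + (M$2$2 - M$1$1) * cot p - M$1$2 = 0" using eig_root[OF p(1) False p(3)] by simp
      have "0 < Im z" "Re z = cot p" using zz True False by (auto simp: geodesic_def)
      thus ?thesis using r c0 by simp
    next
      case qn: False
      define u where "u = cot p"
      define v where "v = cot q"
      define a where "a = M$1$1"
      define b where "b = M$1$2"
      define c where "c = M$2$1"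
      define dd where "dd = M$2$2"
      have ru: "c * u^2 + (dd - a) * u - b = 0" "l1 = c * u + dd"
        using eig_root[OF p(1) False p(3)] by (simp_all add: u_def a_def b_def c_def dd_def)
      have rv: "c * v^2 + (dd - a) * v - b = 0" "l2 = c * v + dd"
        using eig_root[OF q(1) qn q(3)] by (simp_all add: v_def a_def b_def c_def dd_def)
      have uv: "u \<noteq> v" using ru(2) rv(2) p(2) q(2) by auto
      have "(u - v) * (c * (u + v) + (dd - a)) = 0" by (rule a7[OF ru(1) rv(1)])
      hence s1: "c * (u + v) + (dd - a) = 0" using uv by simp
      have s2: "c * u * v + b = 0" by (rule a8[OF ru(1) s1])
      have zc: "0 < Im z" "cmod (z - complex_of_real ((u + v) / 2)) = \<bar>u - v\<bar> / 2"
        using zz False qn by (auto simp: geodesic_def u_def v_def)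
      have "(cmod (z - complex_of_real ((u + v) / 2)))^2 = (x - (u+v)/2)^2 + y^2"
        by (simp add: cmod_power2 x_def y_def)
      hence circ: "(x - (u+v)/2)^2 + y^2 = (\<bar>u - v\<bar> / 2)^2" unfolding zc(2) by linarith
      have circ2: "x^2 + y^2 - (u + v) * x + u * v = 0"
      proof -
        have "(\<bar>u - v\<bar> / 2)^2 = (u - v)^2 / 4" by (simp add: power_divide)
        hence "(x - (u+v)/2)^2 + y^2 = (u - v)^2/4" using circ by simp
        thus ?thesis by (simp add: field_simps power2_eq_square)
      qed
      have da: "dd - a = -(c*(u+v))" using s1 by linarith
      have bb: "b = -(c * u * v)" using s2 by linarith
      have "c * (x^2 + y^2) + (dd - a) * x - b = c * (x^2 + y^2 - (u + v) * x + u * v)"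
        unfolding da bb by (simp add: algebra_simps)
      hence "c * (x^2 + y^2) + (dd - a) * x - b = 0" using circ2 by simp
      thus ?thesis using zc(1) by (simp add: x_def y_def a_def b_def c_def dd_def)
    qed
  qed
qed



lemma wpow_Suc0: "wpow w (Suc 0) = w" by (simp add: wpow_def)

lemma lyndon_single: "lyndon [x]"
  by (simp add: lyndon_def)

lemma letter_less_irrefl: "(x, x) \<notin> letter_less"
  by (simp add: letter_less_def)

lemma lyndon_rep: "lyndon (replicate n x) \<Longrightarrow> n = 1"
proof (rule ccontr)
  assume l: "lyndon (replicate n x)" and n: "n \<noteq> 1"
  have "n \<noteq> 0" using l by (auto simp: lyndon_def)
  hence "0 < (1::nat) \<and> 1 < length (replicate n x)" using n by simp
  moreover have "\<forall>k. 0 < k \<and> k < length (replicate n x) \<longrightarrow> (replicate n x, rotate k (replicate n x)) \<in> lexord letter_less"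
    using l unfolding lyndon_def by blast
  ultimately have "(replicate n x, rotate 1 (replicate n x)) \<in> lexord letter_less" by blast
  moreover have "rotate 1 (replicate n x) = replicate n x"
    by (metis rotate1_replicate rotate_Suc rotate0 id_apply One_nat_def)
  ultimately show False using lexord_irreflexive[of letter_less] letter_less_irrefl by metis
qed

lemma rotate_single: "rotate k [x] = [x]"
  by (induction k) simp_all

lemma final_comb:
  fixes A B :: "real^2^2"
  assumes K1: "\<And>w. w \<noteq> [] \<Longrightarrow> wtr A B w \<le> wtr A B (replicate (length w) Lb)"
    and K2: "\<And>w. w \<noteq> [] \<Longrightarrow> wtr A B w = wtr A B (replicate (length w) Lb) \<Longrightarrow>
        w = replicate (length w) Lb \<or> (wtr A B [La] = wtr A B [Lb] \<and> w = replicate (length w) La)"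
    and K3: "\<And>n. wtr A B [La] = wtr A B [Lb] \<Longrightarrow> wtr A B (replicate n La) = wtr A B (replicate n Lb)"
  shows "complete_optimal A B (if wtr A B [La] = wtr A B [Lb] then {[La], [Lb]} else {[Lb]})
    \<and> (\<forall>S. complete_optimal A B S \<longrightarrow>
          S = (if wtr A B [La] = wtr A B [Lb] then {[La], [Lb]} else {[Lb]}))"
proof -
  define eq where "eq = (wtr A B [La] = wtr A B [Lb])"
  define SS where "SS = (if eq then {[La], [Lb]} else {[Lb]})"
  have maxb: "maximal_word A B [Lb]"
    unfolding maximal_word_def wle_def using K1 by (simp add: wpow_1 wpow_Suc0 wpow_single)
  have maxa: "eq \<Longrightarrow> maximal_word A B [La]"
    unfolding maximal_word_def wle_def eq_def using K1 K3 by (simp add: wpow_1 wpow_Suc0 wpow_single)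
  have maxchar: "w = replicate (length w) Lb \<or> (eq \<and> w = replicate (length w) La)"
    if m: "maximal_word A B w" for w
  proof -
    have w0: "w \<noteq> []" using m by (simp add: maximal_word_def)
    have "wle A B [Lb] w" using m by (simp add: maximal_word_def)
    hence "wtr A B (replicate (length w) Lb) \<le> wtr A B w" by (simp add: wle_def wpow_1 wpow_Suc0 wpow_single)
    hence "wtr A B w = wtr A B (replicate (length w) Lb)" using K1[OF w0] by simp
    thus ?thesis using K2[OF w0] by (simp add: eq_def)
  qed
  have inSS: "v \<in> SS" if "maximal_word A B v" "lyndon v" for v
  proof -
    from maxchar[OF that(1)] have "v = replicate (length v) Lb \<or> (eq \<and> v = replicate (length v) La)" .
    thus ?thesis
    proof
      assume h: "v = replicate (length v) Lb"
      hence "length v = 1" using lyndon_rep that(2) by metis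
      hence "v = [Lb]" using h by (metis One_nat_def replicate_Suc replicate_0)
      thus ?thesis by (simp add: SS_def)
    next
      assume h: "eq \<and> v = replicate (length v) La"
      hence "length v = 1" using lyndon_rep that(2) by metis
      hence "v = [La]" using h by (metis One_nat_def replicate_Suc replicate_0)
      thus ?thesis using h by (simp add: SS_def)
    qed
  qed
  have co: "complete_optimal A B SS"
    unfolding complete_optimal_def
  proof (rule conjI)
    show "\<forall>v\<in>SS. maximal_word A B v \<and> lyndon v"
      using maxa maxb by (auto simp: SS_def lyndon_single)
  next
    show "\<forall>w. maximal_word A B w \<longrightarrow> (\<exists>v\<in>SS. \<exists>k n. n \<ge> 1 \<and> w = wpow (rotate k v) n)"
  proof (intro allI impI)
    fix w assume m: "maximal_word A B w"
    have w0: "length w \<ge> 1" using m by (simp add: maximal_word_def Suc_le_eq)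
    from maxchar[OF m] show "\<exists>v\<in>SS. \<exists>k n. n \<ge> 1 \<and> w = wpow (rotate k v) n"
    proof
      assume h: "w = replicate (length w) Lb"
      have "[Lb] \<in> SS" by (simp add: SS_def)
      thus ?thesis using h w0 by (metis rotate0 id_apply wpow_single)
    next
      assume h: "eq \<and> w = replicate (length w) La"
      have "[La] \<in> SS" using h by (simp add: SS_def)
      thus ?thesis using h w0 by (metis rotate0 id_apply wpow_single)
    qed
  qed
  qed
  have uniq: "S = SS" if c: "complete_optimal A B S" for S
  proof
    show "S \<subseteq> SS" using c inSS by (auto simp: complete_optimal_def)
    have get: "[x] \<in> S" if mx: "maximal_word A B [x]" for x
    proof -
      obtain v k n where v: "v \<in> S" "n \<ge> 1" "[x] = wpow (rotate k v) n"
        using c mx by (auto simp: complete_optimal_def)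
      have "v \<in> SS" using v(1) c inSS by (auto simp: complete_optimal_def)
      hence "\<exists>y. v = [y]" by (auto simp: SS_def split: if_splits)
      then obtain y where vy: "v = [y]" by blast
      have "[x] = replicate n y" using v(3) by (simp add: vy rotate_single wpow_single)
      hence "x = y" by (metis list.set_intros(1) in_set_replicate)
      thus ?thesis using v(1) vy by simp
    qed
    show "SS \<subseteq> S" using get maxb maxa by (auto simp: SS_def split: if_splits)
  qed
  show ?thesis unfolding eq_def[symmetric] SS_def[symmetric] using co uniq by blast
qed



definition Sm :: "real \<Rightarrow> real \<Rightarrow> real^2^2" where
  "Sm x y = (\<chi> i j. if i = 1 then (if j = 1 then 1 else -x) else (if j = 1 then 0 else y))"
definition Si :: "real \<Rightarrow> real \<Rightarrow> real^2^2" where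
  "Si x y = (\<chi> i j. if i = 1 then (if j = 1 then 1 else x/y) else (if j = 1 then 0 else 1/y))"

lemma Sm_entries: "Sm x y $1$1 = 1" "Sm x y $1$2 = -x" "Sm x y $2$1 = 0" "Sm x y $2$2 = y"
  by (simp_all add: Sm_def)
lemma Si_entries: "Si x y $1$1 = 1" "Si x y $1$2 = x/y" "Si x y $2$1 = 0" "Si x y $2$2 = 1/y"
  by (simp_all add: Si_def)

lemma SmSi: assumes "y \<noteq> 0" shows "Sm x y ** Si x y = mat 1" "Si x y ** Sm x y = mat 1"
  using assms by (simp_all add: mat2_eq_iff mm_entries Sm_entries Si_entries mat1_entries field_simps)

definition cj :: "real \<Rightarrow> real \<Rightarrow> real^2^2 \<Rightarrow> real^2^2" where
  "cj x y X = Sm x y ** (X ** Si x y)"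

lemma SiSm_Z: assumes "y \<noteq> 0" shows "Si x y ** (Sm x y ** Z) = Z"
  by (simp add: matrix_mul_assoc SmSi[OF assms] matrix_mul_lid)

lemma cj_mult: assumes "y \<noteq> 0" shows "cj x y X ** cj x y Y = cj x y (X ** Y)"
  unfolding cj_def by (simp add: matrix_mul_assoc[symmetric] SiSm_Z[OF assms])

lemma cj_one: assumes "y \<noteq> 0" shows "cj x y (mat 1) = mat 1"
  unfolding cj_def by (simp add: matrix_mul_lid SmSi[OF assms])

lemma phi_cj: assumes "y \<noteq> 0"
  shows "phi (cj x y A) (cj x y B) w = cj x y (phi A B w)"
proof (induction w)
  case Nil thus ?case by (simp add: phi_Nil cj_one[OF assms])
next
  case (Cons l w)
  thus ?case by (cases l) (simp_all add: phi_Cons cj_mult[OF assms])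
qed

lemma trace_cj: assumes "y \<noteq> 0" shows "trace (cj x y X) = trace X"
proof -
  have "trace (cj x y X) = trace ((X ** Si x y) ** Sm x y)" unfolding cj_def by (rule trace_mul_sym)
  also have "\<dots> = trace X" by (simp add: matrix_mul_assoc[symmetric] SmSi[OF assms] matrix_mul_rid)
  finally show ?thesis .
qed

lemma det_cj: assumes "y \<noteq> 0" shows "det (cj x y X) = det X"
proof -
  have "det (Sm x y) * det (Si x y) = 1" using assms by (simp add: det_2 Sm_entries Si_entries)
  thus ?thesis unfolding cj_def by (simp add: det_mul algebra_simps)
qed

lemma a12: fixes a b c dd x y :: real
  shows "c*(x^2+y^2) + (dd - a)*x - b = 0 \<Longrightarrow> a*x + b - x*x*c - x*dd = y*(y*c)" by algebra

lemma sym_cj: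
  fixes X :: "real^2^2"
  assumes y: "y \<noteq> 0" and c: "X$2$1 * (x^2 + y^2) + (X$2$2 - X$1$1) * x - X$1$2 = 0"
  shows "(cj x y X)$1$2 = (cj x y X)$2$1"
proof -
  have e12: "(cj x y X)$1$2 = (X$1$1*x + X$1$2 - x*x*X$2$1 - x*X$2$2)/y"
    using y by (simp add: cj_def mm_entries Sm_entries Si_entries field_simps)
  have e21: "(cj x y X)$2$1 = y*X$2$1"
    by (simp add: cj_def mm_entries Sm_entries Si_entries)
  have "X$1$1*x + X$1$2 - x*x*X$2$1 - x*X$2$2 = y*(y*X$2$1)" by (rule a12[OF c])
  thus ?thesis using y unfolding e12 e21 by simp
qed

lemma uncj: assumes "y \<noteq> 0" shows "Si x y ** (cj x y Z ** Sm x y) = Z"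
  unfolding cj_def by (simp add: matrix_mul_assoc[symmetric] SiSm_Z[OF assms] SmSi[OF assms] matrix_mul_rid)

lemma nc_cj: assumes "y \<noteq> 0" "A ** B \<noteq> B ** A" shows "cj x y A ** cj x y B \<noteq> cj x y B ** cj x y A"
proof
  assume "cj x y A ** cj x y B = cj x y B ** cj x y A"
  hence "cj x y (A ** B) = cj x y (B ** A)" by (simp add: cj_mult[OF assms(1)])
  hence "Si x y ** (cj x y (A ** B) ** Sm x y) = Si x y ** (cj x y (B ** A) ** Sm x y)" by simp
  hence "A ** B = B ** A" by (simp add: uncj[OF assms(1)])
  thus False using assms(2) by simp
qed

lemma wtr_single: "wtr A B [La] = trace A" "wtr A B [Lb] = trace B"
  by (simp_all add: wtr_def phi_Cons phi_Nil matrix_mul_rid)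

theorem theorem3p4:
  fixes A B :: "real^2^2"
  assumes "SL2 A" and "SL2 B"
    and "A ** B \<noteq> B ** A"
    and "coherently_oriented A B"
    and "hyperbolic A" and "hyperbolic B"
    and "translation_axis A \<inter> translation_axis B \<noteq> {}"
    and "wtr A B [La] \<le> wtr A B [Lb]"
  shows "complete_optimal A B (if wtr A B [La] = wtr A B [Lb] then {[La], [Lb]} else {[Lb]})
    \<and> (\<forall>S. complete_optimal A B S \<longrightarrow>
          S = (if wtr A B [La] = wtr A B [Lb] then {[La], [Lb]} else {[Lb]}))"
proof -
  have dA: "det A = 1" and dB: "det B = 1" using assms(1,2) by (simp_all add: SL2_def)
  have tA: "2 < trace A" and tB: "2 < trace B" using assms(5,6) by (simp_all add: hyperbolic_def)
  have tAB: "trace A \<le> trace B" using assms(8) by (simp add: wtr_single)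
  obtain z where zA: "z \<in> translation_axis A" and zB: "z \<in> translation_axis B" using assms(7) by blast
  define x where "x = Re z"
  define y where "y = Im z"
  have cA: "0 < y" "A$2$1 * (x^2 + y^2) + (A$2$2 - A$1$1) * x - A$1$2 = 0"
    using axis_cond[OF dA tA zA] by (simp_all add: x_def y_def)
  have cB: "B$2$1 * (x^2 + y^2) + (B$2$2 - B$1$1) * x - B$1$2 = 0"
    using axis_cond[OF dB tB zB] by (simp_all add: x_def y_def)
  have y0: "y \<noteq> 0" using cA(1) by simp
  define A' where "A' = cj x y A"
  define B' where "B' = cj x y B"
  have sA: "A'$1$2 = A'$2$1" unfolding A'_def by (rule sym_cj[OF y0 cA(2)])
  have sB: "B'$1$2 = B'$2$1" unfolding B'_def by (rule sym_cj[OF y0 cB])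
  have dA': "det A' = 1" using dA by (simp add: A'_def det_cj[OF y0])
  have dB': "det B' = 1" using dB by (simp add: B'_def det_cj[OF y0])
  have tA': "trace A' = trace A" by (simp add: A'_def trace_cj[OF y0])
  have tB': "trace B' = trace B" by (simp add: B'_def trace_cj[OF y0])
  have nc': "A' ** B' \<noteq> B' ** A'" unfolding A'_def B'_def by (rule nc_cj[OF y0 assms(3)])
  have W: "wtr A B w = trace (phi A' B' w)" for w
    by (simp add: wtr_def A'_def B'_def phi_cj[OF y0] trace_cj[OF y0])
  have tA2: "2 < trace A'" using tA tA' by simp
  have tAB': "trace A' \<le> trace B'" using tAB tA' tB' by simp
  note ks = key_sym[OF sA sB dA' dB' tA2 tAB' nc']
  show ?thesis
  proof (rule final_comb)
    fix w :: "letter list" assume "w \<noteq> []"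
    thus "wtr A B w \<le> wtr A B (replicate (length w) Lb)" unfolding W by (rule ks(1))
  next
    fix w :: "letter list" assume w: "w \<noteq> []" and e: "wtr A B w = wtr A B (replicate (length w) Lb)"
    have "w = replicate (length w) Lb \<or> (trace A' = trace B' \<and> w = replicate (length w) La)"
      using ks(2)[OF w] e unfolding W by blast
    thus "w = replicate (length w) Lb \<or> (wtr A B [La] = wtr A B [Lb] \<and> w = replicate (length w) La)"
      using tA' tB' by (simp add: wtr_single)
  next
    fix n assume e: "wtr A B [La] = wtr A B [Lb]"
    hence te: "trace A = trace B" by (simp add: wtr_single)
    have "wtr A B (replicate n La) = lam (trace A)^n + (1/lam (trace A))^n"
      unfolding wtr_def using trace_pow[where L=A and l=La and A=A and B=B and n=n] dA tA by simp
    moreover have "wtr A B (replicate n Lb) = lam (trace B)^n + (1/lam (trace B))^n"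
      unfolding wtr_def using trace_pow[where L=B and l=Lb and A=A and B=B and n=n] dB tB by simp
    ultimately show "wtr A B (replicate n La) = wtr A B (replicate n Lb)" using te by simp
  qed
qed


end
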